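(* Let $0<\alpha_o<2$ and let $f:(\alpha_o,2]\to[0,\infty)$ be a measurable probability density, i.e. $\int_{\alpha_o}^2 f(q)\,dq=1$. Assume there is $\beta>0$ such that $f(t+\alpha_o)>0$ for all sufficiently small $t>0$ and, for every $p>0$, $$\lim_{t\to 0^+}\frac{f(tp+\alpha_o)}{f(t+\alpha_o)}=p^{\beta}.$$ For integers $n\ge 2$ and $y\in\mathbb{R}^d\setminus\{0\}$ define $$I(n,y):=\int_{\alpha_o}^{2}|y|^{-1-q}\,n^{1-q/\alpha_o}\,f(q)\,dq ,\qquad \tilde g(n):=f\!\left(\frac{\alpha_o}{\log n}+\alpha_o\right)\frac{\alpha_o}{\log n}\,\Gamma(\beta+1),$$ and $E(n,y):=I(n,y)-\tilde g(n)\,|y|^{-1-\alpha_o}$. Then for every $\delta>0$, $$\lim_{n\to\infty}\ \sup_{|y|\ge\delta}\ \frac{|E(n,y)|}{\tilde g(n)}=0,$$ that is, $\tilde g(n)^{-1}I(n,y)\to|y|^{-1-\alpha_o}$ as $n\to\infty$, uniformly in $y$ outside any ball centered at $0$.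
   Context: In the original setting, $f=F'_\alpha$ is the density of the distribution function $F_\alpha:=\pi\circ\alpha^{-1}$, the image of a probability measure $\pi$ under a stability-index function $\alpha$ taking values in $[\alpha_o,2]$, where $\alpha_o$ is its minimal value. $\Gamma$ denotes the Gamma function and $\log$ the natural logarithm. *)

theory Defs
  imports "HOL-Analysis.Analysis"
begin

definition Iint :: "real \<Rightarrow> (real \<Rightarrow> real) \<Rightarrow> nat \<Rightarrow> 'a::real_normed_vector \<Rightarrow> real" where
  "Iint ao f n y = (LINT q:{ao<..2}|lborel. norm y powr (-1 - q) * real n powr (1 - q / ao) * f q)"

definition gtilde :: "real \<Rightarrow> (real \<Rightarrow> real) \<Rightarrow> real \<Rightarrow> nat \<Rightarrow> real" where
  "gtilde ao f \<beta> n = f (ao / ln (real n) + ao) * (ao / ln (real n)) * Gamma (\<beta> + 1)"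

definition Eerr :: "real \<Rightarrow> (real \<Rightarrow> real) \<Rightarrow> real \<Rightarrow> nat \<Rightarrow> 'a::real_normed_vector \<Rightarrow> real" where
  "Eerr ao f \<beta> n y = Iint ao f n y - gtilde ao f \<beta> n * norm y powr (-1 - ao)"

end

theory Submission
  imports Defs "HOL-Real_Asymp.Real_Asymp"
begin



lemma gamma_lint:
  fixes a :: real assumes a: "a > 0"
  shows "set_integrable lborel {0..} (\<lambda>t. t powr (a - 1) / exp t)"
    and "(LINT t:{0..}|lborel. t powr (a - 1) / exp t) = Gamma a"
proof -
  have hk: "((\<lambda>t. t powr (a - 1) / exp t) has_integral Gamma a) {0..}"
    using Gamma_integral_real[OF a] .
  have ai: "(\<lambda>t. t powr (a - 1) / exp t) absolutely_integrable_on {0..}"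
    using hk by (intro nonnegative_absolutely_integrable_1) (auto simp: has_integral_integrable)
  have m: "(\<lambda>t. indicat_real {0..} t *\<^sub>R (t powr (a - 1) / exp t)) \<in> borel_measurable lborel"
    by measurable
  show si: "set_integrable lborel {0..} (\<lambda>t. t powr (a - 1) / exp t)"
    using ai m unfolding set_integrable_def
    using integrable_completion by (metis measurable_lborel1)
  show "(LINT t:{0..}|lborel. t powr (a - 1) / exp t) = Gamma a"
    using set_borel_integral_eq_integral(2)[OF si] hk by (simp add: integral_unique)
qed



lemma seq_sets_measure:
  fixes \<psi> :: "real \<Rightarrow> real" and zs :: "nat \<Rightarrow> real"
  assumes meas[measurable]: "\<psi> \<in> borel_measurable borel"
    and conv: "\<And>v. ((\<lambda>x. \<psi> (x + v) - \<psi> x) \<longlongrightarrow> 0) at_top"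
    and zs: "\<And>n. zs n \<ge> real n" and L: "L \<ge> 0"
  shows "(\<lambda>N. measure lborel {v\<in>{0..L}. \<forall>m\<ge>N. \<bar>\<psi> (zs m + v) - \<psi> (zs m)\<bar> < 1/2}) \<longlonglongrightarrow> L"
    and "{v\<in>{0..L}. \<forall>m\<ge>N. \<bar>\<psi> (zs m + v) - \<psi> (zs m)\<bar> < 1/2} \<in> sets lborel"
proof -
  define A where "A N = {v\<in>{0..L}. \<forall>m\<ge>N. \<bar>\<psi> (zs m + v) - \<psi> (zs m)\<bar> < 1/2}" for N
  have As: "A N \<in> sets lborel" for N
    unfolding A_def by measurable
  then show "{v\<in>{0..L}. \<forall>m\<ge>N. \<bar>\<psi> (zs m + v) - \<psi> (zs m)\<bar> < 1/2} \<in> sets lborel"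
    unfolding A_def .
  have inc: "incseq A" unfolding incseq_def A_def by auto
  have zlim: "filterlim zs at_top sequentially"
    by (rule filterlim_at_top_mono[OF filterlim_real_sequentially]) (auto simp: zs)
  have U: "(\<Union>N. A N) = {0..L}"
  proof
    show "(\<Union>N. A N) \<subseteq> {0..L}" unfolding A_def by auto
    show "{0..L} \<subseteq> (\<Union>N. A N)"
    proof
      fix v assume v: "v \<in> {0..L}"
      have "((\<lambda>m. \<psi> (zs m + v) - \<psi> (zs m)) \<longlonglongrightarrow> 0)"
        using filterlim_compose[OF conv[of v] zlim] by simp
      then have "\<forall>\<^sub>F m in sequentially. \<bar>\<psi> (zs m + v) - \<psi> (zs m)\<bar> < 1/2"
        by (rule order_tendstoD(2)[OF tendsto_rabs_zero, simplified]) simp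
      then obtain N where "\<forall>m\<ge>N. \<bar>\<psi> (zs m + v) - \<psi> (zs m)\<bar> < 1/2"
        by (auto simp: eventually_sequentially)
      then show "v \<in> (\<Union>N. A N)" using v unfolding A_def by auto
    qed
  qed
  have "(\<lambda>N. measure lborel (A N)) \<longlonglongrightarrow> measure lborel (\<Union>N. A N)"
    by (rule Lim_measure_incseq) (use As inc U L in \<open>auto simp: emeasure_lborel_Icc\<close>)
  then show "(\<lambda>N. measure lborel {v\<in>{0..L}. \<forall>m\<ge>N. \<bar>\<psi> (zs m + v) - \<psi> (zs m)\<bar> < 1/2}) \<longlonglongrightarrow> L"
    using U L by (simp add: A_def)
qed

lemma uct_bounded:
  fixes \<psi> :: "real \<Rightarrow> real"
  assumes meas[measurable]: "\<psi> \<in> borel_measurable borel"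
    and conv: "\<And>v. ((\<lambda>x. \<psi> (x + v) - \<psi> x) \<longlongrightarrow> 0) at_top"
  shows "\<exists>X. \<forall>x\<ge>X. \<forall>u\<in>{0..1}. \<bar>\<psi> (x+u) - \<psi> x\<bar> \<le> 1"
proof (rule ccontr)
  assume "\<not> ?thesis"
  then have "\<forall>n::nat. \<exists>x u. x \<ge> real n \<and> u \<in> {0..1} \<and> \<bar>\<psi> (x+u) - \<psi> x\<bar> > 1"
    by (meson not_le)
  then obtain xs us where xu: "\<And>n. xs n \<ge> real n \<and> us n \<in> {0..1} \<and> \<bar>\<psi> (xs n + us n) - \<psi> (xs n)\<bar> > 1"
    by metis
  define ys where "ys n = xs n + us n" for n
  have ys: "ys n \<ge> real n" for n using xu[of n] by (auto simp: ys_def)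
  define U where "U N = {v\<in>{0..3}. \<forall>m\<ge>N. \<bar>\<psi> (xs m + v) - \<psi> (xs m)\<bar> < 1/2}" for N
  define V where "V N = {v\<in>{0..2}. \<forall>m\<ge>N. \<bar>\<psi> (ys m + v) - \<psi> (ys m)\<bar> < 1/2}" for N
  have Ul: "(\<lambda>N. measure lborel (U N)) \<longlonglongrightarrow> 3" and Us: "\<And>N. U N \<in> sets lborel"
    unfolding U_def using seq_sets_measure[OF meas conv, of xs 3] xu by auto
  have Vl: "(\<lambda>N. measure lborel (V N)) \<longlonglongrightarrow> 2" and Vs: "\<And>N. V N \<in> sets lborel"
    unfolding V_def using seq_sets_measure[OF meas conv, of ys 2] ys by auto
  have "\<forall>\<^sub>F N in sequentially. measure lborel (U N) > 5/2"
    using Ul by (rule order_tendstoD) simp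
  moreover have "\<forall>\<^sub>F N in sequentially. measure lborel (V N) > 3/2"
    using Vl by (rule order_tendstoD) simp
  ultimately obtain N where mU: "measure lborel (U N) > 5/2" and mV: "measure lborel (V N) > 3/2"
    using eventually_sequentially by (metis (no_types, lifting) eventually_conj_iff eventually_happens' sequentially_bot)
  define W where "W = (+) (us N) ` V N"
  have Wsub: "W \<subseteq> {0..3}" using xu[of N] by (auto simp: W_def V_def)
  have Usub: "U N \<subseteq> {0..3}" by (auto simp: U_def)
  have Wl: "W \<in> sets lebesgue" unfolding W_def
    by (rule lebesgue_sets_translation) (use Vs in auto)
  have Ul': "U N \<in> sets lebesgue" using Us by auto
  have mW: "measure lebesgue W = measure lborel (V N)"
    unfolding W_def using measure_translation[of "us N" "V N"] Vs by (simp add: measure_completion)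
  have mU': "measure lebesgue (U N) = measure lborel (U N)"
    using Us by (simp add: measure_completion)
  have fin: "emeasure lebesgue A \<noteq> \<infinity>" if "A \<subseteq> {0..3}" "A \<in> sets lebesgue" for A :: "real set"
  proof -
    have "emeasure lebesgue A \<le> emeasure lebesgue {0..3::real}"
      by (rule emeasure_mono) (use that in auto)
    also have "\<dots> = 3" by simp
    finally show ?thesis by (auto simp: top_unique)
  qed
  have "U N \<inter> W \<noteq> {}"
  proof
    assume dis: "U N \<inter> W = {}"
    have "measure lebesgue (U N \<union> W) = measure lebesgue (U N) + measure lebesgue W"
      by (rule measure_Union) (use fin Wsub Usub Wl Ul' dis in auto)
    also have "\<dots> > 4" using mU mV mU' mW by simp
    finally have "measure lebesgue (U N \<union> W) > 4" .
    moreover have "measure lebesgue (U N \<union> W) \<le> measure lebesgue {0..3::real}"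
      by (rule measure_mono_fmeasurable) (use Wsub Usub Wl Ul' in auto)
    ultimately show False by simp
  qed
  then obtain v where vU: "v \<in> U N" and vW: "v \<in> W" by blast
  then obtain w where w: "w \<in> V N" "v = us N + w" by (auto simp: W_def)
  have 1: "\<bar>\<psi> (xs N + v) - \<psi> (xs N)\<bar> < 1/2" using vU by (auto simp: U_def)
  have 2: "\<bar>\<psi> (ys N + w) - \<psi> (ys N)\<bar> < 1/2" using w by (auto simp: V_def)
  have "ys N + w = xs N + v" using w by (simp add: ys_def)
  with 1 2 have "\<bar>\<psi> (ys N) - \<psi> (xs N)\<bar> < 1" by (simp only: )
  with xu[of N] show False by (simp add: ys_def)
qed



lemma chain_bound:
  fixes \<psi> :: "real \<Rightarrow> real"
  assumes X: "\<forall>x\<ge>X. \<forall>u\<in>{0..1}. \<bar>\<psi> (x+u) - \<psi> x\<bar> \<le> 1"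
  shows "x \<ge> X \<Longrightarrow> y \<ge> X \<Longrightarrow> \<bar>\<psi> y - \<psi> x\<bar> \<le> \<bar>y - x\<bar> + 1"
proof -
  have ind: "\<forall>x\<ge>X. \<forall>u\<in>{0..real n}. \<bar>\<psi> (x+u) - \<psi> x\<bar> \<le> real n" for n :: nat
  proof (induction n)
    case 0 then show ?case by simp
  next
    case (Suc n)
    show ?case
    proof (intro allI impI ballI)
      fix x u assume x: "x \<ge> X" and u: "u \<in> {0..real (Suc n)}"
      show "\<bar>\<psi> (x+u) - \<psi> x\<bar> \<le> real (Suc n)"
      proof (cases "u \<le> 1")
        case True then show ?thesis using X x u by force
      next
        case False
        have a: "\<bar>\<psi> (x+1) - \<psi> x\<bar> \<le> 1" using X x by force
        have b: "\<bar>\<psi> ((x+1)+(u-1)) - \<psi> (x+1)\<bar> \<le> real n"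
          using Suc.IH x u False by (intro Suc.IH[rule_format]) auto
        have "x + u = (x+1)+(u-1)" by simp
        then show ?thesis using a b by (simp add: abs_le_iff)
      qed
    qed
  qed
  have main: "\<bar>\<psi> y - \<psi> x\<bar> \<le> \<bar>y - x\<bar> + 1" if "x \<ge> X" "y \<ge> X" "x \<le> y" for x y
  proof -
    define n where "n = nat \<lceil>y - x\<rceil>"
    have "y - x \<le> real n" "real n \<le> y - x + 1" using that by (auto simp: n_def)
    then have "\<bar>\<psi> (x + (y-x)) - \<psi> x\<bar> \<le> real n" using that by (intro ind[rule_format]) auto
    then show ?thesis using \<open>real n \<le> y - x + 1\<close> that by simp
  qed
  show "x \<ge> X \<Longrightarrow> y \<ge> X \<Longrightarrow> \<bar>\<psi> y - \<psi> x\<bar> \<le> \<bar>y - x\<bar> + 1"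
    using main[of x y] main[of y x] by (cases "x \<le> y") (auto simp: abs_minus_commute)
qed




lemma exp_neg_right: "filterlim (\<lambda>x::real. exp (- x)) (at_right 0) at_top"
  by real_asymp

lemma eventually_at_top_shift:
  fixes v :: real
  assumes "\<forall>\<^sub>F x in at_top. P x" shows "\<forall>\<^sub>F x in at_top. P (x + v)"
proof -
  obtain N where "\<forall>x\<ge>N. P x" using assms by (auto simp: eventually_at_top_linorder)
  then have "\<forall>x\<ge>N - v. P (x + v)" by (metis diff_le_eq)
  then show ?thesis by (auto simp: eventually_at_top_linorder)
qed

lemma potter:
  fixes h :: "real \<Rightarrow> real" and \<beta> T :: real
  assumes hm[measurable]: "h \<in> borel_measurable borel"
    and hpos: "\<forall>\<^sub>F t in at_right 0. 0 < h t"
    and hrv: "\<And>p. 0 < p \<Longrightarrow> ((\<lambda>t. h (t * p) / h t) \<longlongrightarrow> p powr \<beta>) (at_right 0)"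
    and T: "T > 0"
  shows "\<exists>t0>0. t0 \<le> T \<and> (\<forall>s\<in>{0<..t0}. 0 < h s) \<and>
     (\<forall>s\<in>{0<..t0}. \<forall>t\<in>{0<..t0}.
        h s / h t \<le> exp 1 * ((s/t) powr (\<beta>+1) + (s/t) powr (\<beta>-1)) \<and>
        exp (-1) * (s/t) powr \<beta> / (s/t + t/s) \<le> h s / h t)"
proof -
  define \<psi> where "\<psi> x = ln (h (exp (- x))) + \<beta> * x" for x
  have \<psi>m: "\<psi> \<in> borel_measurable borel" unfolding \<psi>_def by measurable
  have hpos': "\<forall>\<^sub>F x in at_top. 0 < h (exp (- x))"
    using filterlim_iff[THEN iffD1, OF exp_neg_right, rule_format, OF hpos] .
  have conv: "((\<lambda>x. \<psi> (x + v) - \<psi> x) \<longlongrightarrow> 0) at_top" for v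
  proof -
    define p where "p = exp (- v)"
    have p: "p > 0" by (simp add: p_def)
    have "((\<lambda>x. h (exp (- x) * p) / h (exp (- x))) \<longlongrightarrow> p powr \<beta>) at_top"
      using filterlim_compose[OF hrv[OF p] exp_neg_right] .
    then have "((\<lambda>x. ln (h (exp (- x) * p) / h (exp (- x))) + \<beta> * v) \<longlongrightarrow> ln (p powr \<beta>) + \<beta> * v) at_top"
      using p by (intro tendsto_intros) auto
    moreover have "ln (p powr \<beta>) + \<beta> * v = 0" using p by (simp add: p_def ln_powr)
    moreover have "\<forall>\<^sub>F x in at_top. ln (h (exp (- x) * p) / h (exp (- x))) + \<beta> * v = \<psi> (x + v) - \<psi> x"
    proof -
      have "\<forall>\<^sub>F x in at_top. 0 < h (exp (- (x + v)))"
        by (rule eventually_at_top_shift[OF hpos'])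
      then show ?thesis using hpos'
      proof eventually_elim
        case (elim x)
        have e: "exp (- (x + v)) = exp (- x) * p" by (simp add: p_def exp_add[symmetric])
        have e2: "h (exp (- x) * p) = h (exp (- (x + v)))" by (simp only: e)
        have "ln (h (exp (- x) * p) / h (exp (- x))) = ln (h (exp (- (x + v)))) - ln (h (exp (- x)))"
          using elim by (simp only: e2 ln_div) simp
        then show ?case by (simp add: \<psi>_def algebra_simps)
      qed
    qed
    ultimately show ?thesis by (simp add: tendsto_cong)
  qed
  obtain X where X: "\<forall>x\<ge>X. \<forall>u\<in>{0..1}. \<bar>\<psi> (x+u) - \<psi> x\<bar> \<le> 1"
    using uct_bounded[OF \<psi>m conv] by blast
  obtain b where b: "b > 0" "\<forall>t. 0 < t \<longrightarrow> t < b \<longrightarrow> 0 < h t"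
    using hpos by (auto simp: eventually_at_right_field)
  define t0 where "t0 = min (min (exp (- X)) (b/2)) T"
  have t0: "t0 > 0" "t0 \<le> T" using b T by (auto simp: t0_def)
  have hp: "\<forall>s\<in>{0<..t0}. 0 < h s" using b by (auto simp: t0_def)
  have key: "\<bar>ln (h s / h t) - \<beta> * ln (s / t)\<bar> \<le> \<bar>ln (s / t)\<bar> + 1"
    if s: "s \<in> {0<..t0}" and t: "t \<in> {0<..t0}" for s t
  proof -
    have sX: "- ln s \<ge> X" using s ln_le_cancel_iff[of s "exp (-X)"] by (auto simp: t0_def)
    have tX: "- ln t \<ge> X" using t ln_le_cancel_iff[of t "exp (-X)"] by (auto simp: t0_def)
    have hs: "h s > 0" "h t > 0" using hp s t by auto
    have "\<bar>\<psi> (- ln s) - \<psi> (- ln t)\<bar> \<le> \<bar>- ln s - - ln t\<bar> + 1"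
      by (rule chain_bound[OF X tX sX])
    moreover have "\<psi> (- ln s) - \<psi> (- ln t) = ln (h s / h t) - \<beta> * ln (s / t)"
      using s t hs by (simp add: \<psi>_def ln_div algebra_simps)
    moreover have "\<bar>- ln s - - ln t\<bar> = \<bar>ln (s / t)\<bar>" using s t by (simp add: ln_div)
    ultimately show ?thesis by simp
  qed
  have bnds: "h s / h t \<le> exp 1 * ((s/t) powr (\<beta>+1) + (s/t) powr (\<beta>-1)) \<and>
        exp (-1) * (s/t) powr \<beta> / (s/t + t/s) \<le> h s / h t"
    if s: "s \<in> {0<..t0}" and t: "t \<in> {0<..t0}" for s t
  proof -
    define r where "r = s / t"
    have r: "r > 0" using s t by (simp add: r_def)
    have ts: "t / s = 1 / r" by (simp add: r_def)
    have hs: "h s > 0" "h t > 0" using hp s t by auto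
    define L where "L = ln (h s / h t)"
    have eL: "h s / h t = exp L" using hs by (simp add: L_def)
    have kL: "\<bar>L - \<beta> * ln r\<bar> \<le> \<bar>ln r\<bar> + 1" using key[OF s t] by (simp add: L_def r_def)
    have ea: "exp \<bar>ln r\<bar> \<le> r + 1 / r" and ea1: "exp \<bar>ln r\<bar> \<ge> 1"
    proof -
      show "exp \<bar>ln r\<bar> \<ge> 1" by simp
      show "exp \<bar>ln r\<bar> \<le> r + 1 / r"
      proof (cases "r \<ge> 1")
        case True then show ?thesis using r by simp
      next
        case False
        then have "\<bar>ln r\<bar> = - ln r" using r by simp
        then have "exp \<bar>ln r\<bar> = 1 / r" using r by (simp add: exp_minus inverse_eq_divide)
        then show ?thesis using r by simp
      qed
    qed
    have rp: "exp (\<beta> * ln r) = r powr \<beta>" using r by (simp add: powr_def)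
    have up: "exp L \<le> exp 1 * (r powr \<beta> * exp \<bar>ln r\<bar>)"
    proof -
      have "exp L \<le> exp (1 + \<beta> * ln r + \<bar>ln r\<bar>)" using kL by simp
      also have "\<dots> = exp 1 * (exp (\<beta> * ln r) * exp \<bar>ln r\<bar>)" by (simp add: exp_add)
      finally show ?thesis by (simp add: rp)
    qed
    also have "\<dots> \<le> exp 1 * (r powr \<beta> * (r + 1 / r))"
      using ea r by (intro mult_left_mono) auto
    also have "r powr \<beta> * (r + 1 / r) = r powr (\<beta>+1) + r powr (\<beta>-1)"
      using r by (simp add: powr_add powr_diff distrib_left divide_simps)
    finally have U: "exp L \<le> exp 1 * (r powr (\<beta>+1) + r powr (\<beta>-1))" .
    have "exp (-1) * r powr \<beta> / (r + 1 / r) \<le> exp (-1) * r powr \<beta> / exp \<bar>ln r\<bar>"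
      using ea ea1 r by (intro divide_left_mono) (auto intro!: mult_pos_pos add_pos_pos)
    also have "\<dots> = exp (-1) * exp (\<beta> * ln r) / exp \<bar>ln r\<bar>" by (simp only: rp)
    also have "\<dots> = exp (-1 + \<beta> * ln r - \<bar>ln r\<bar>)" by (simp only: exp_add exp_diff)
    also have "\<dots> \<le> exp L" using kL by simp
    finally have Lo: "exp (-1) * r powr \<beta> / (r + 1 / r) \<le> exp L" .
    have st: "s / t = r" by (simp add: r_def)
    show ?thesis unfolding st ts eL using U Lo by blast
  qed
  show ?thesis using t0 hp bnds by blast
qed



lemma dct_ratio:
  fixes h :: "real \<Rightarrow> real" and e :: "nat \<Rightarrow> real" and k :: nat
  assumes hm[measurable]: "h \<in> borel_measurable borel"
    and hrv: "\<And>p. 0 < p \<Longrightarrow> ((\<lambda>t. h (t * p) / h t) \<longlongrightarrow> p powr \<beta>) (at_right 0)"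
    and t0: "t0 > 0" and hp: "\<forall>s\<in>{0<..t0}. 0 < h s"
    and pu: "\<forall>s\<in>{0<..t0}. \<forall>t\<in>{0<..t0}. h s / h t \<le> exp 1 * ((s/t) powr (\<beta>+1) + (s/t) powr (\<beta>-1))"
    and \<beta>: "\<beta> > 0"
    and epos: "\<And>n. e n > 0" and elim: "e \<longlonglongrightarrow> 0"
  shows "(\<lambda>n. integral\<^sup>L lborel (\<lambda>p. indicator {0<..t0 / e n} p * (p ^ k * exp (- p) * (h (e n * p) / h (e n)))))
           \<longlonglongrightarrow> Gamma (\<beta> + k + 1)"
proof -
  define S where "S n p = indicator {0<..t0 / e n} p * (p ^ k * exp (- p) * (h (e n * p) / h (e n)))" for n p
  define \<Phi> where "\<Phi> p = indicator {0..} p * (p powr (\<beta> + k + 1 - 1) / exp p)" for p :: real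
  define W where "W p = indicator {0..} p * (exp 1 * (p powr (\<beta> + k + 2 - 1) / exp p + p powr (\<beta> + k - 1) / exp p))" for p :: real
  have eright: "filterlim e (at_right 0) sequentially"
    using elim epos by (intro tendsto_imp_filterlim_at_right) (auto intro: always_eventually)
  obtain N where N: "\<And>n. n \<ge> N \<Longrightarrow> e n \<le> t0"
    using order_tendstoD(2)[OF elim t0] unfolding eventually_sequentially by (meson less_imp_le)
  have g1: "set_integrable lborel {0..} (\<lambda>t. t powr (\<beta> + k + 2 - 1) / exp t)"
    using gamma_lint(1)[of "\<beta> + k + 2"] \<beta> by simp
  have g2: "set_integrable lborel {0..} (\<lambda>t. t powr (\<beta> + k - 1) / exp t)"
    using gamma_lint(1)[of "\<beta> + k"] \<beta> by simp
  have Wint: "integrable lborel W"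
  proof -
    have "integrable lborel (\<lambda>p. indicat_real {0..} p *\<^sub>R (p powr (\<beta> + k + 2 - 1) / exp p)
       + indicat_real {0..} p *\<^sub>R (p powr (\<beta> + k - 1) / exp p))"
      using g1 g2 unfolding set_integrable_def by (rule Bochner_Integration.integrable_add)
    then have "integrable lborel (\<lambda>p. exp 1 * (indicat_real {0..} p *\<^sub>R (p powr (\<beta> + k + 2 - 1) / exp p)
       + indicat_real {0..} p *\<^sub>R (p powr (\<beta> + k - 1) / exp p)))"
      by (rule integrable_mult_right)
    moreover have "W = (\<lambda>p. exp 1 * (indicat_real {0..} p *\<^sub>R (p powr (\<beta> + k + 2 - 1) / exp p)
       + indicat_real {0..} p *\<^sub>R (p powr (\<beta> + k - 1) / exp p)))"
      by (auto simp: W_def fun_eq_iff algebra_simps)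
    ultimately show ?thesis by simp
  qed
  have \<Phi>int: "integral\<^sup>L lborel \<Phi> = Gamma (\<beta> + k + 1)"
    using gamma_lint(2)[of "\<beta> + k + 1"] \<beta> by (simp add: \<Phi>_def[abs_def] set_lebesgue_integral_def)
  have lim: "(\<lambda>n. S n p) \<longlonglongrightarrow> \<Phi> p" for p
  proof (cases "p > 0")
    case False
    then have "S n p = 0" for n by (auto simp: S_def)
    moreover have "\<Phi> p = 0" using False by (cases "p = 0") (auto simp: \<Phi>_def)
    ultimately show ?thesis by simp
  next
    case True
    have r: "(\<lambda>n. h (e n * p) / h (e n)) \<longlonglongrightarrow> p powr \<beta>"
      using filterlim_compose[OF hrv[OF True] eright] .
    have ev: "\<forall>\<^sub>F n in sequentially. e n < t0 / p"
      using order_tendstoD(2)[OF elim] t0 True by simp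
    have "\<forall>\<^sub>F n in sequentially. S n p = p ^ k * exp (- p) * (h (e n * p) / h (e n))"
      using ev
    proof eventually_elim
      case (elim n)
      then have "p \<le> t0 / e n" using epos[of n] True by (simp add: field_simps)
      then show ?case using True by (simp add: S_def)
    qed
    moreover have "(\<lambda>n. p ^ k * exp (- p) * (h (e n * p) / h (e n))) \<longlonglongrightarrow> p ^ k * exp (- p) * p powr \<beta>"
      by (intro tendsto_intros r)
    moreover have "p ^ k * exp (- p) * p powr \<beta> = \<Phi> p"
      using True by (simp add: \<Phi>_def powr_add powr_realpow[symmetric] exp_minus field_simps)
    ultimately show ?thesis by (simp add: tendsto_cong)
  qed
  have bound: "norm (S n p) \<le> W p" if n: "n \<ge> N" for n p
  proof (cases "p \<in> {0<..t0 / e n}")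
    case False
    then have "S n p = 0" by (simp add: S_def)
    moreover have "W p \<ge> 0" by (simp add: W_def)
    ultimately show ?thesis by simp
  next
    case True
    have en: "e n > 0" "e n \<le> t0" using epos N n by auto
    have p: "p > 0" "e n * p \<le> t0" using True en by (auto simp: field_simps)
    have s: "e n * p \<in> {0<..t0}" using p en by simp
    have t: "e n \<in> {0<..t0}" using en by simp
    have pos: "h (e n * p) / h (e n) > 0" using hp s t by auto
    have rb: "h (e n * p) / h (e n) \<le> exp 1 * (p powr (\<beta>+1) + p powr (\<beta>-1))"
      using pu[rule_format, OF s t] en by simp
    have "norm (S n p) = p ^ k * exp (- p) * (h (e n * p) / h (e n))"
    proof -
      have "h (e n * p) > 0" "h (e n) > 0" using hp s t by auto
      then show ?thesis using True p by (simp add: S_def abs_mult)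
    qed
    also have "\<dots> \<le> p ^ k * exp (- p) * (exp 1 * (p powr (\<beta>+1) + p powr (\<beta>-1)))"
      using rb p by (intro mult_left_mono) auto
    also have "\<dots> = W p"
      using p by (simp add: W_def powr_add powr_diff powr_realpow[symmetric] exp_minus field_simps)
    finally show ?thesis .
  qed
  have "(\<lambda>n. integral\<^sup>L lborel (S (n + N))) \<longlonglongrightarrow> integral\<^sup>L lborel \<Phi>"
  proof (rule integral_dominated_convergence[where w = W])
    show "\<Phi> \<in> borel_measurable lborel" unfolding \<Phi>_def by measurable
    show "S (n + N) \<in> borel_measurable lborel" for n unfolding S_def by measurable
    show "integrable lborel W" by (rule Wint)
    show "AE p in lborel. (\<lambda>n. S (n + N) p) \<longlonglongrightarrow> \<Phi> p"
      using lim by (intro always_eventually allI) (rule LIMSEQ_ignore_initial_segment)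
    show "AE p in lborel. norm (S (n + N) p) \<le> W p" for n
      using bound by (intro always_eventually allI) auto
  qed
  then have "(\<lambda>n. integral\<^sup>L lborel (S n)) \<longlonglongrightarrow> integral\<^sup>L lborel \<Phi>"
    by (rule LIMSEQ_offset)
  then show ?thesis using \<Phi>int by (simp add: S_def[abs_def])
qed




lemma subst_lemma:
  fixes h :: "real \<Rightarrow> real" and \<epsilon> a t0 :: real and k :: nat
  assumes eps: "\<epsilon> > 0" and hne: "h \<epsilon> \<noteq> 0"
  shows "(LINT q:{a<..a+t0}|lborel. (q - a) ^ k * exp (- (q - a) / \<epsilon>) * h (q - a))
     = \<epsilon> ^ (k+1) * h \<epsilon> * integral\<^sup>L lborel (\<lambda>p. indicator {0<..t0 / \<epsilon>} p * (p ^ k * exp (- p) * (h (\<epsilon> * p) / h \<epsilon>)))"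
proof -
  have "(LINT q:{a<..a+t0}|lborel. (q - a) ^ k * exp (- (q - a) / \<epsilon>) * h (q - a))
      = integral\<^sup>L lborel (\<lambda>q. indicator {a<..a+t0} q * ((q - a) ^ k * exp (- (q - a) / \<epsilon>) * h (q - a)))"
    by (simp add: set_lebesgue_integral_def)
  also have "\<dots> = \<bar>\<epsilon>\<bar> *\<^sub>R integral\<^sup>L lborel (\<lambda>p. indicator {a<..a+t0} (a + \<epsilon> * p) * ((a + \<epsilon> * p - a) ^ k * exp (- (a + \<epsilon> * p - a) / \<epsilon>) * h (a + \<epsilon> * p - a)))"
    using eps by (intro lborel_integral_real_affine) simp
  also have "(\<lambda>p. indicator {a<..a+t0} (a + \<epsilon> * p) * ((a + \<epsilon> * p - a) ^ k * exp (- (a + \<epsilon> * p - a) / \<epsilon>) * h (a + \<epsilon> * p - a)))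
      = (\<lambda>p. (\<epsilon> ^ k * h \<epsilon>) * (indicator {0<..t0 / \<epsilon>} p * (p ^ k * exp (- p) * (h (\<epsilon> * p) / h \<epsilon>))))"
  proof
    fix p
    have i: "indicator {a<..a+t0} (a + \<epsilon> * p) = (indicator {0<..t0 / \<epsilon>} p :: real)"
      using eps by (simp add: indicator_def field_simps zero_less_mult_iff)
    show "indicator {a<..a+t0} (a + \<epsilon> * p) * ((a + \<epsilon> * p - a) ^ k * exp (- (a + \<epsilon> * p - a) / \<epsilon>) * h (a + \<epsilon> * p - a))
      = (\<epsilon> ^ k * h \<epsilon>) * (indicator {0<..t0 / \<epsilon>} p * (p ^ k * exp (- p) * (h (\<epsilon> * p) / h \<epsilon>)))"
      unfolding i using eps hne by (simp add: power_mult_distrib)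
  qed
  also have "integral\<^sup>L lborel (\<lambda>p. (\<epsilon> ^ k * h \<epsilon>) * (indicator {0<..t0 / \<epsilon>} p * (p ^ k * exp (- p) * (h (\<epsilon> * p) / h \<epsilon>))))
     = (\<epsilon> ^ k * h \<epsilon>) * integral\<^sup>L lborel (\<lambda>p. indicator {0<..t0 / \<epsilon>} p * (p ^ k * exp (- p) * (h (\<epsilon> * p) / h \<epsilon>)))"
    by (rule integral_mult_right_zero)
  finally show ?thesis using eps by (simp only: real_scaleR_def abs_of_pos power_Suc mult.assoc Suc_eq_plus1[symmetric])
qed




lemma tail_lim:
  fixes t0 \<beta> K :: real assumes "t0 > 0" "\<beta> > 0"
  shows "((\<lambda>x. exp (- t0 / x) / (x * ((x / t0) powr \<beta> / (x / t0 + t0 / x)))) \<longlongrightarrow> 0) (at_right 0)"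
  using assms by real_asymp

lemma exp_lip: fixes a b :: real shows "\<bar>exp a - exp b\<bar> \<le> max (exp a) (exp b) * \<bar>a - b\<bar>"
proof -
  have *: "exp a - exp b \<le> exp a * (a - b)" if "b \<le> a" for a b :: real
  proof -
    have "exp (b - a) \<ge> 1 + (b - a)" by (rule exp_ge_add_one_self)
    then have "exp a * exp (b - a) \<ge> exp a * (1 + (b - a))" by (intro mult_left_mono) auto
    then have "exp b \<ge> exp a * (1 + (b - a))" by (simp add: exp_diff)
    then show ?thesis by (simp add: algebra_simps)
  qed
  show ?thesis
  proof (cases "b \<le> a")
    case True
    then show ?thesis using *[OF True] by (simp add: max_def)
  next
    case False
    then show ?thesis using *[of a b] by (simp add: max_def abs_minus_commute)
  qed
qed

lemma rpow_bound:
  fixes r q \<delta> :: real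
  assumes d: "\<delta> > 0" and r: "r \<ge> \<delta>" and q: "0 \<le> q" "q \<le> 2"
  shows "r powr (-1 - q) \<le> max 1 ((1/\<delta>) powr 3)"
proof -
  have rp: "r > 0" using d r by simp
  have "r powr (-1 - q) = r powr (- (1 + q))" by simp
  also have "\<dots> = 1 / r powr (1 + q)" by (rule powr_minus_divide)
  also have "\<dots> = (1/r) powr (1 + q)" using rp by (simp add: powr_divide)
  finally have e: "r powr (-1 - q) = (1/r) powr (1 + q)" .
  show ?thesis
  proof (cases "r \<ge> 1")
    case True
    have "(1/r) powr (1 + q) \<le> 1" using True q rp by (intro powr_le1) auto
    then show ?thesis using e by simp
  next
    case False
    have "(1/r) powr (1 + q) \<le> (1/r) powr 3" using False q rp by (intro powr_mono) (auto simp: field_simps)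
    also have "\<dots> \<le> (1/\<delta>) powr 3" using r rp d by (intro powr_mono2) (auto simp: field_simps)
    finally show ?thesis using e by simp
  qed
qed

lemma rpow_lip:
  fixes r q ao \<delta> :: real
  assumes d: "\<delta> > 0" and r: "r \<ge> \<delta>" and q: "0 \<le> ao" "ao \<le> q" "q \<le> 2"
  shows "\<bar>r powr (-1 - q) - r powr (-1 - ao)\<bar> \<le> (1 + max 1 ((1/\<delta>) powr 3) * \<bar>ln \<delta>\<bar>) * (q - ao)"
proof -
  define M where "M = max 1 ((1/\<delta>) powr 3)"
  have rp: "r > 0" using d r by simp
  have ea: "r powr (-1 - q) = exp ((-1 - q) * ln r)" "r powr (-1 - ao) = exp ((-1 - ao) * ln r)"
    using rp by (simp_all add: powr_def)
  have L: "\<bar>r powr (-1 - q) - r powr (-1 - ao)\<bar> \<le> max (r powr (-1 - q)) (r powr (-1 - ao)) * ((q - ao) * \<bar>ln r\<bar>)"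
  proof -
    have "(-1 - q) * ln r - (-1 - ao) * ln r = -((q - ao) * ln r)" by algebra
    then have d: "\<bar>(-1 - q) * ln r - (-1 - ao) * ln r\<bar> = (q - ao) * \<bar>ln r\<bar>"
      using q by (simp only: abs_minus_cancel abs_mult)
    show ?thesis using exp_lip[of "(-1 - q) * ln r" "(-1 - ao) * ln r"] unfolding ea d .
  qed
  show ?thesis
  proof (cases "r \<ge> 1")
    case True
    have m: "max (r powr (-1 - q)) (r powr (-1 - ao)) \<le> r powr (-1)"
    proof -
      have "r powr (-1 - q) \<le> r powr (-1)" "r powr (-1 - ao) \<le> r powr (-1)"
        using True q by (intro powr_mono; simp)+
      then show ?thesis by simp
    qed
    have lr: "\<bar>ln r\<bar> \<le> r" using True rp by (simp add: ln_le_minus_one ln_bound)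
    have "max (r powr (-1 - q)) (r powr (-1 - ao)) * ((q - ao) * \<bar>ln r\<bar>) \<le> r powr (-1) * ((q - ao) * r)"
      using m lr q by (intro mult_mono) (auto intro!: mult_left_mono)
    also have "\<dots> = q - ao" using rp by (simp add: powr_minus field_simps)
    also have "\<dots> \<le> (1 + M * \<bar>ln \<delta>\<bar>) * (q - ao)"
    proof -
      have "M * \<bar>ln \<delta>\<bar> * (q - ao) \<ge> 0" using q by (simp add: M_def)
      then show ?thesis by (simp add: algebra_simps)
    qed
    finally show ?thesis using L M_def by simp
  next
    case False
    have m: "max (r powr (-1 - q)) (r powr (-1 - ao)) \<le> M"
      using rpow_bound[OF d r, of q] rpow_bound[OF d r, of ao] q by (simp add: M_def)
    have lr: "\<bar>ln r\<bar> \<le> \<bar>ln \<delta>\<bar>" using False rp r d by (simp add: abs_if)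
    have "max (r powr (-1 - q)) (r powr (-1 - ao)) * ((q - ao) * \<bar>ln r\<bar>) \<le> M * ((q - ao) * \<bar>ln \<delta>\<bar>)"
      using m lr q by (intro mult_mono mult_left_mono) (auto simp: M_def)
    also have "\<dots> \<le> (1 + M * \<bar>ln \<delta>\<bar>) * (q - ao)" using q by (simp add: algebra_simps)
    finally show ?thesis using L M_def by simp
  qed
qed


lemma bdd_int:
  fixes f u :: "real \<Rightarrow> real"
  assumes f_int: "set_integrable lborel S f" and A: "A \<subseteq> S" and Am: "A \<in> sets borel"
    and um: "u \<in> borel_measurable borel" and ub: "\<forall>q\<in>A. \<bar>u q\<bar> \<le> K"
  shows "set_integrable lborel A (\<lambda>q. u q * f q)"
proof -
  have fA: "set_integrable lborel A f" by (rule set_integrable_subset[OF f_int]) (use A Am in auto)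
  have "set_integrable lborel A (\<lambda>q. K * f q)" using fA by simp
  moreover have "set_borel_measurable lborel A (\<lambda>q. u q * f q)"
  proof -
    have m: "(\<lambda>x. indicat_real A x *\<^sub>R f x) \<in> borel_measurable lborel"
      using fA unfolding set_integrable_def by (rule borel_measurable_integrable)
    have um': "u \<in> borel_measurable lborel" using um by simp
    have "(\<lambda>x. u x * (indicat_real A x *\<^sub>R f x)) \<in> borel_measurable lborel"
      using um' m by (rule borel_measurable_times)
    then show ?thesis unfolding set_borel_measurable_def by (simp add: mult_ac)
  qed
  moreover have "AE q in lborel. q \<in> A \<longrightarrow> norm (u q * f q) \<le> norm (K * f q)"
  proof (rule always_eventually, intro allI impI)
    fix q assume "q \<in> A"
    then have "\<bar>u q\<bar> \<le> \<bar>K\<bar>" using ub by force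
    then show "norm (u q * f q) \<le> norm (K * f q)" by (simp add: abs_mult mult_right_mono)
  qed
  ultimately show ?thesis by (rule set_integrable_bound)
qed


lemma abs_set_int_le:
  fixes D G :: "'b \<Rightarrow> real"
  assumes "set_integrable M A D" "set_integrable M A G" "\<And>x. x \<in> A \<Longrightarrow> \<bar>D x\<bar> \<le> G x"
  shows "\<bar>LINT x:A|M. D x\<bar> \<le> (LINT x:A|M. G x)"
proof -
  have "(LINT x:A|M. D x) \<le> (LINT x:A|M. G x)"
    using assms by (intro set_integral_mono) (auto simp: abs_le_iff)
  moreover have "(LINT x:A|M. - D x) \<le> (LINT x:A|M. G x)"
  proof (rule set_integral_mono)
    have "set_integrable M A (\<lambda>x. (-1) * D x)" using assms(1) by (rule set_integrable_mult_right)
    then show "set_integrable M A (\<lambda>x. - D x)" by simp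
  qed (use assms in \<open>auto simp: abs_le_iff\<close>)
  moreover have "(LINT x:A|M. - D x) = - (LINT x:A|M. D x)"
    using assms(1) by (rule set_integral_uminus)
  ultimately show ?thesis by linarith
qed

lemma set_int_nonneg:
  fixes f :: "'b \<Rightarrow> real"
  assumes "\<And>x. x \<in> A \<Longrightarrow> 0 \<le> f x"
  shows "0 \<le> (LINT x:A|M. f x)"
  unfolding set_lebesgue_integral_def
  by (rule Bochner_Integration.integral_nonneg) (use assms in \<open>auto simp: indicator_def\<close>)

theorem mainTheorem1:
  fixes ao \<beta> \<delta> :: real and f :: "real \<Rightarrow> real"
  assumes ao_pos: "0 < ao" and ao_lt: "ao < 2"
    and f_meas: "set_borel_measurable lborel {ao<..2} f"
    and f_nonneg: "\<And>q. q \<in> {ao<..2} \<Longrightarrow> 0 \<le> f q"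
    and f_int: "set_integrable lborel {ao<..2} f"
    and f_one: "(LINT q:{ao<..2}|lborel. f q) = 1"
    and \<beta>_pos: "0 < \<beta>"
    and f_pos: "\<forall>\<^sub>F t in at_right 0. 0 < f (t + ao)"
    and f_rv: "\<And>p. 0 < p \<Longrightarrow> ((\<lambda>t. f (t * p + ao) / f (t + ao)) \<longlongrightarrow> p powr \<beta>) (at_right 0)"
    and \<delta>_pos: "0 < \<delta>"
  shows "((\<lambda>n::nat. SUP y\<in>{y::'a::euclidean_space. \<delta> \<le> norm y}.
             ereal (\<bar>Eerr ao f \<beta> n y\<bar> / gtilde ao f \<beta> n)) \<longlongrightarrow> 0) sequentially"
proof -
  define c where "c = 2 - ao"
  have c: "c > 0" using ao_lt by (simp add: c_def)
  define g where "g q = indicator {ao<..2} q * f q" for q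
  have gm[measurable]: "g \<in> borel_measurable borel"
    using f_meas unfolding set_borel_measurable_def g_def by simp
  define h where "h s = g (ao + s)" for s
  have hm[measurable]: "h \<in> borel_measurable borel" unfolding h_def by measurable
  have hf: "h s = f (ao + s)" if "0 < s" "s \<le> c" for s
    using that by (simp add: h_def g_def c_def)
  have evc: "\<forall>\<^sub>F t in at_right 0. t < c"
    using c by (auto simp: eventually_at_right_field intro!: exI[of _ c])
  have hpos: "\<forall>\<^sub>F t in at_right 0. 0 < h t"
    using f_pos evc eventually_at_right_less[of 0]
  proof eventually_elim
    case (elim t) then show ?case using hf[of t] by (simp add: add.commute)
  qed
  have hrv: "((\<lambda>t. h (t * p) / h t) \<longlongrightarrow> p powr \<beta>) (at_right 0)" if p: "0 < p" for p
  proof -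
    have "\<forall>\<^sub>F t in at_right 0. t < c / max 1 p"
      using c p by (auto simp: eventually_at_right_field intro!: exI[of _ "c / max 1 p"])
    then have "\<forall>\<^sub>F t in at_right 0. f (t * p + ao) / f (t + ao) = h (t * p) / h t"
      using eventually_at_right_less[of 0]
    proof eventually_elim
      case (elim t)
      have "t * max 1 p < c" using elim p by (simp add: field_simps)
      moreover have "t * p \<le> t * max 1 p" "t * 1 \<le> t * max 1 p" using elim
        by (intro mult_left_mono; simp)+
      ultimately have "t * p \<le> c" "t \<le> c" by linarith+
      then show ?case using elim p hf[of t] hf[of "t * p"] by (simp add: add.commute)
    qed
    then show ?thesis using f_rv[OF p] by (rule tendsto_cong[THEN iffD1])
  qed
  obtain t0 where t0: "t0 > 0" "t0 \<le> c / 2" and hp: "\<forall>s\<in>{0<..t0}. 0 < h s"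
    and pb: "\<forall>s\<in>{0<..t0}. \<forall>t\<in>{0<..t0}.
        h s / h t \<le> exp 1 * ((s/t) powr (\<beta>+1) + (s/t) powr (\<beta>-1)) \<and>
        exp (-1) * (s/t) powr \<beta> / (s/t + t/s) \<le> h s / h t"
    using potter[OF hm hpos hrv, of "c/2"] c by auto
  have pu: "\<forall>s\<in>{0<..t0}. \<forall>t\<in>{0<..t0}. h s / h t \<le> exp 1 * ((s/t) powr (\<beta>+1) + (s/t) powr (\<beta>-1))"
    using pb by blast
  define e where "e n = ao / ln (real (max 2 n))" for n
  have epos: "e n > 0" for n
    using ao_pos by (simp add: e_def)
  have e_eq: "e n = ao / ln (real n)" if "n \<ge> 2" for n using that by (simp add: e_def max_def)
  have elim: "e \<longlonglongrightarrow> 0"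
  proof -
    have "(\<lambda>n::nat. ao / ln (real n)) \<longlonglongrightarrow> 0" by real_asymp
    moreover have "\<forall>\<^sub>F n in sequentially. ao / ln (real n) = e n"
      using eventually_ge_at_top[of 2] by eventually_elim (simp add: e_eq)
    ultimately show ?thesis by (simp add: tendsto_cong)
  qed
  obtain N0 where N0: "\<And>n. n \<ge> N0 \<Longrightarrow> e n \<le> t0"
    using order_tendstoD(2)[OF elim t0(1)] unfolding eventually_sequentially by (meson less_imp_le)
  define A where "A k n = (LINT q:{ao<..ao+t0}|lborel. (q - ao) ^ k * exp (- (q - ao) / e n) * f q)" for k :: nat and n
  have limA: "(\<lambda>n. A k n / (e n ^ (k+1) * h (e n))) \<longlonglongrightarrow> Gamma (\<beta> + k + 1)" for k
  proof -
    have "\<forall>\<^sub>F n in sequentially. integral\<^sup>L lborel (\<lambda>p. indicator {0<..t0 / e n} p * (p ^ k * exp (- p) * (h (e n * p) / h (e n))))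
         = A k n / (e n ^ (k+1) * h (e n))"
      using eventually_ge_at_top[of N0]
    proof eventually_elim
      case (elim n)
      have en: "e n \<in> {0<..t0}" using N0 elim epos by auto
      then have hn: "h (e n) > 0" using hp by auto
      have "A k n = (LINT q:{ao<..ao+t0}|lborel. (q - ao) ^ k * exp (- (q - ao) / e n) * h (q - ao))"
        unfolding A_def
      proof (rule set_lebesgue_integral_cong)
        show "{ao<..ao + t0} \<in> sets lborel" by simp
        show "\<forall>q. q \<in> {ao<..ao + t0} \<longrightarrow> (q - ao) ^ k * exp (- (q - ao) / e n) * f q = (q - ao) ^ k * exp (- (q - ao) / e n) * h (q - ao)"
        proof (intro allI impI)
        fix q assume "q \<in> {ao<..ao + t0}"
        then have "h (q - ao) = f q" using hf[of "q - ao"] t0 c by auto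
        then show "(q - ao) ^ k * exp (- (q - ao) / e n) * f q = (q - ao) ^ k * exp (- (q - ao) / e n) * h (q - ao)"
          by simp
        qed
      qed
      also have "\<dots> = e n ^ (k+1) * h (e n) * integral\<^sup>L lborel (\<lambda>p. indicator {0<..t0 / e n} p * (p ^ k * exp (- p) * (h (e n * p) / h (e n))))"
        using subst_lemma[of "e n" h ao t0 k] epos hn by simp
      finally show ?case using hn epos[of n] by simp
    qed
    moreover have "(\<lambda>n. integral\<^sup>L lborel (\<lambda>p. indicator {0<..t0 / e n} p * (p ^ k * exp (- p) * (h (e n * p) / h (e n)))))
           \<longlonglongrightarrow> Gamma (\<beta> + k + 1)"
      by (rule dct_ratio[OF hm hrv t0(1) hp pu \<beta>_pos epos elim])
    ultimately show ?thesis by (simp add: tendsto_cong)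
  qed
  define \<Gamma>1 where "\<Gamma>1 = Gamma (\<beta> + 1)"
  have \<Gamma>1: "\<Gamma>1 > 0" using \<beta>_pos by (simp add: \<Gamma>1_def Gamma_real_pos)
  define M where "M = max 1 ((1/\<delta>) powr 3)"
  have M: "M \<ge> 1" by (simp add: M_def)
  define C1 where "C1 = 1 + M * \<bar>ln \<delta>\<bar>"
  have ht0: "h t0 > 0" using hp t0 by auto
  define R where "R x = exp (- t0 / x) / (x * ((x / t0) powr \<beta> / (x / t0 + t0 / x)))" for x
  define B where "B n = M * \<bar>A 0 n / (e n * h (e n)) - \<Gamma>1\<bar> / \<Gamma>1
       + C1 * e n * (A 1 n / (e n ^ 2 * h (e n))) / \<Gamma>1
       + M / (\<Gamma>1 * h t0 * exp (-1)) * R (e n)" for n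
  have Blim: "B \<longlonglongrightarrow> 0"
  proof -
    have eright: "filterlim e (at_right 0) sequentially"
      using elim epos by (intro tendsto_imp_filterlim_at_right) (auto intro: always_eventually)
    have R0: "(\<lambda>n. R (e n)) \<longlonglongrightarrow> 0"
      unfolding R_def using filterlim_compose[OF tail_lim[OF t0(1) \<beta>_pos] eright] .
    have a0: "(\<lambda>n. A 0 n / (e n * h (e n))) \<longlonglongrightarrow> \<Gamma>1"
      using limA[of 0] by (simp add: \<Gamma>1_def)
    have a1: "(\<lambda>n. A 1 n / (e n ^ 2 * h (e n))) \<longlonglongrightarrow> Gamma (\<beta> + 2)"
      using limA[of 1] by (simp add: add.assoc power2_eq_square)
    have "B \<longlonglongrightarrow> M * \<bar>\<Gamma>1 - \<Gamma>1\<bar> / \<Gamma>1 + C1 * 0 * Gamma (\<beta> + 2) / \<Gamma>1 + M / (\<Gamma>1 * h t0 * exp (-1)) * 0"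
      unfolding B_def[abs_def] using \<Gamma>1 by (intro tendsto_intros a0 a1 elim R0) auto
    then show ?thesis by simp
  qed
  have Bmain: "\<bar>Eerr ao f \<beta> n y\<bar> / gtilde ao f \<beta> n \<le> B n \<and> gtilde ao f \<beta> n > 0"
    if n: "n \<ge> max N0 2" and y: "\<delta> \<le> norm y" for n and y :: 'a
  proof -
    define \<epsilon> where "\<epsilon> = e n"
    have n2: "n \<ge> 2" and nN0: "n \<ge> N0" using n by auto
    have eps: "\<epsilon> > 0" "\<epsilon> \<le> t0" "\<epsilon> = ao / ln (real n)"
      using epos[of n] N0[OF nN0] e_eq[OF n2] by (auto simp: \<epsilon>_def)
    have lnpos: "ln (real n) > 0" using n2 by simp
    have he: "h \<epsilon> > 0" using hp eps by auto
    have tc: "t0 < c" using t0 c by simp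
    have gt: "gtilde ao f \<beta> n = \<epsilon> * h \<epsilon> * \<Gamma>1"
    proof -
      have "f (ao / ln (real n) + ao) = h \<epsilon>" using hf[of \<epsilon>] eps tc by (simp add: add.commute)
      then show ?thesis unfolding gtilde_def \<Gamma>1_def using eps by simp
    qed
    define r where "r = norm y"
    have r: "r \<ge> \<delta>" "r > 0" using y \<delta>_pos by (auto simp: r_def)
    define wt where "wt q = exp (- (q - ao) / \<epsilon>)" for q
    have pw: "real n powr (1 - q / ao) = wt q" for q
    proof -
      have "(1 - q / ao) * ln (real n) = - (q - ao) / \<epsilon>"
        using ao_pos lnpos by (simp add: eps(3) field_simps)
      then show ?thesis using n2 by (simp add: powr_def wt_def)
    qed
    define S1 where "S1 = {ao<..ao+t0}"
    define S2 where "S2 = {ao+t0<..2}"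
    have S12: "{ao<..2} = S1 \<union> S2" "S1 \<inter> S2 = {}" "S1 \<subseteq> {ao<..2}" "S2 \<subseteq> {ao<..2}"
      using tc t0 by (auto simp: S1_def S2_def c_def)
    have S1s: "S1 \<in> sets borel" "S2 \<in> sets borel" by (auto simp: S1_def S2_def)
    have wt01: "0 \<le> wt q" "wt q \<le> 1" if "q \<ge> ao" for q
    proof -
      have "- (q - ao) / \<epsilon> \<le> 0" using that eps(1) by (simp add: divide_nonpos_pos)
      then show "0 \<le> wt q" "wt q \<le> 1" unfolding wt_def by auto
    qed
    have rb: "r powr (-1 - q) \<le> M" if "0 \<le> q" "q \<le> 2" for q
      using rpow_bound[OF \<delta>_pos r(1) that] by (simp add: M_def)
    have rpos: "r powr (-1 - q) \<ge> 0" for q by simp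
    have qS: "ao < q" "q \<le> 2" if "q \<in> S1 \<union> S2" for q using that tc t0 by (auto simp: S1_def S2_def c_def)
    have wtm[measurable]: "wt \<in> borel_measurable borel" unfolding wt_def by measurable
    have int_K: "set_integrable lborel S (\<lambda>q. r powr (-1 - q) * wt q * f q)" if "S = S1 \<or> S = S2" for S
    proof (rule bdd_int[OF f_int, where K = M])
      show "S \<subseteq> {ao<..2}" "S \<in> sets borel" using that S12 S1s by auto
      show "(\<lambda>q. r powr (-1 - q) * wt q) \<in> borel_measurable borel" by measurable
      show "\<forall>q\<in>S. \<bar>r powr (-1 - q) * wt q\<bar> \<le> M"
      proof
        fix q assume "q \<in> S"
        then have q: "ao < q" "q \<le> 2" using qS that by auto
        then show "\<bar>r powr (-1 - q) * wt q\<bar> \<le> M"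
        proof -
          have "r powr (-1 - q) * wt q \<le> M * 1"
            using rb[of q] wt01[of q] q ao_pos M by (intro mult_mono) auto
          moreover have "0 \<le> r powr (-1 - q) * wt q" using wt01[of q] q by simp
          ultimately show ?thesis by simp
        qed
      qed
    qed
    have S1q: "ao < q" "q \<le> ao + t0" "q \<le> 2" if "q \<in> S1" for q
      using that tc t0 by (auto simp: S1_def c_def)
    have int_W0: "set_integrable lborel S1 (\<lambda>q. wt q * f q)"
    proof (rule bdd_int[OF f_int, where K = 1])
      show "S1 \<subseteq> {ao<..2}" "S1 \<in> sets borel" using S12 S1s by auto
      show "wt \<in> borel_measurable borel" by measurable
      show "\<forall>q\<in>S1. \<bar>wt q\<bar> \<le> 1" using wt01 S1q by fastforce
    qed
    have int_W1: "set_integrable lborel S1 (\<lambda>q. C1 * ((q - ao) * wt q * f q))"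
    proof -
      have "set_integrable lborel S1 (\<lambda>q. ((q - ao) * wt q) * f q)"
      proof (rule bdd_int[OF f_int, where K = t0])
        show "S1 \<subseteq> {ao<..2}" "S1 \<in> sets borel" using S12 S1s by auto
        show "(\<lambda>q. (q - ao) * wt q) \<in> borel_measurable borel" by measurable
        show "\<forall>q\<in>S1. \<bar>(q - ao) * wt q\<bar> \<le> t0"
        proof
          fix q assume q: "q \<in> S1"
          have "(q - ao) * wt q \<le> t0 * 1" using S1q[OF q] wt01[of q] by (intro mult_mono) auto
          moreover have "0 \<le> (q - ao) * wt q" using S1q[OF q] wt01[of q] by simp
          ultimately show "\<bar>(q - ao) * wt q\<bar> \<le> t0" by simp
        qed
      qed
      then show ?thesis by (intro set_integrable_mult_right) (simp add: mult.assoc)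
    qed
    define D where "D q = (r powr (-1 - q) - r powr (-1 - ao)) * wt q * f q" for q
    have int_D: "set_integrable lborel S1 D"
      unfolding D_def
    proof (rule bdd_int[OF f_int, where K = "2 * M"])
      show "S1 \<subseteq> {ao<..2}" "S1 \<in> sets borel" using S12 S1s by auto
      show "(\<lambda>q. (r powr (-1 - q) - r powr (-1 - ao)) * wt q) \<in> borel_measurable borel" by measurable
      show "\<forall>q\<in>S1. \<bar>(r powr (-1 - q) - r powr (-1 - ao)) * wt q\<bar> \<le> 2 * M"
      proof
        fix q assume q: "q \<in> S1"
        have a: "\<bar>r powr (-1 - q) - r powr (-1 - ao)\<bar> \<le> 2 * M"
        proof -
          have "r powr (-1 - q) \<le> M" "r powr (-1 - ao) \<le> M"
            using rb[of q] rb[of ao] S1q[OF q] ao_pos ao_lt by auto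
          moreover have "0 \<le> r powr (-1 - q)" "0 \<le> r powr (-1 - ao)" by simp_all
          ultimately show ?thesis unfolding abs_le_iff by linarith
        qed
        have "\<bar>(r powr (-1 - q) - r powr (-1 - ao)) * wt q\<bar> \<le> 2 * M * 1"
          unfolding abs_mult using a wt01[of q] S1q[OF q] by (intro mult_mono) auto
        then show "\<bar>(r powr (-1 - q) - r powr (-1 - ao)) * wt q\<bar> \<le> 2 * M" by simp
      qed
    qed
    have int_f1: "set_integrable lborel S1 f" and int_f2: "set_integrable lborel S2 f"
      using S12 S1s by (auto intro: set_integrable_subset[OF f_int])
    have A0: "A 0 n = (LINT q:S1|lborel. wt q * f q)"
      by (simp add: A_def S1_def wt_def \<epsilon>_def)
    have A1: "A 1 n = (LINT q:S1|lborel. (q - ao) * wt q * f q)"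
      by (simp add: A_def S1_def wt_def \<epsilon>_def)
    have Iint: "Iint ao f n y = (LINT q:S1|lborel. r powr (-1 - q) * wt q * f q) + (LINT q:S2|lborel. r powr (-1 - q) * wt q * f q)"
    proof -
      have "Iint ao f n y = (LINT q:{ao<..2}|lborel. r powr (-1 - q) * wt q * f q)"
        by (simp add: Iint_def pw r_def)
      also have "\<dots> = (LINT q:S1|lborel. r powr (-1 - q) * wt q * f q) + (LINT q:S2|lborel. r powr (-1 - q) * wt q * f q)"
        unfolding S12(1) by (rule set_integral_Un[OF S12(2) int_K int_K]) auto
      finally show ?thesis .
    qed
    have I1: "(LINT q:S1|lborel. r powr (-1 - q) * wt q * f q) = r powr (-1 - ao) * A 0 n + (LINT q:S1|lborel. D q)"
    proof -
      have "(LINT q:S1|lborel. r powr (-1 - q) * wt q * f q) = (LINT q:S1|lborel. r powr (-1 - ao) * (wt q * f q) + D q)"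
        by (rule set_lebesgue_integral_cong) (auto simp: D_def S1s algebra_simps)
      also have "\<dots> = (LINT q:S1|lborel. r powr (-1 - ao) * (wt q * f q)) + (LINT q:S1|lborel. D q)"
        by (rule set_integral_add) (use int_W0 int_D in auto)
      also have "(LINT q:S1|lborel. r powr (-1 - ao) * (wt q * f q)) = r powr (-1 - ao) * A 0 n"
        unfolding A0 by (rule set_integral_mult_right)
      finally show ?thesis .
    qed
    have fnn: "0 \<le> f q" if "q \<in> S1 \<union> S2" for q using f_nonneg qS[OF that] by auto
    have b2: "\<bar>LINT q:S1|lborel. D q\<bar> \<le> C1 * A 1 n"
    proof -
      have "\<bar>LINT q:S1|lborel. D q\<bar> \<le> (LINT q:S1|lborel. C1 * ((q - ao) * wt q * f q))"
      proof (rule abs_set_int_le[OF int_D int_W1])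
        fix q assume q: "q \<in> S1"
        have l: "\<bar>r powr (-1 - q) - r powr (-1 - ao)\<bar> \<le> C1 * (q - ao)"
          using rpow_lip[OF \<delta>_pos r(1), of ao q] S1q[OF q] ao_pos by (simp add: C1_def M_def)
        have "\<bar>D q\<bar> = \<bar>r powr (-1 - q) - r powr (-1 - ao)\<bar> * (wt q * f q)"
          using wt01[of q] fnn[of q] S1q[OF q] q by (simp add: D_def abs_mult)
        also have "\<dots> \<le> C1 * (q - ao) * (wt q * f q)"
          using l wt01[of q] fnn[of q] S1q[OF q] q by (intro mult_right_mono) auto
        finally show "\<bar>D q\<bar> \<le> C1 * ((q - ao) * wt q * f q)" by (simp add: mult_ac)
      qed
      also have "\<dots> = C1 * A 1 n" unfolding A1 by (rule set_integral_mult_right)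
      finally show ?thesis .
    qed
    have f2le: "(LINT q:S2|lborel. f q) \<le> 1"
    proof -
      have "1 = (LINT q:S1|lborel. f q) + (LINT q:S2|lborel. f q)"
        unfolding f_one[symmetric] S12(1) by (rule set_integral_Un[OF S12(2) int_f1 int_f2])
      moreover have "0 \<le> (LINT q:S1|lborel. f q)" using fnn by (intro set_int_nonneg) auto
      ultimately show ?thesis by linarith
    qed
    define X where "X = exp (- t0 / \<epsilon>)"
    have X: "X > 0" by (simp add: X_def)
    have b3: "\<bar>LINT q:S2|lborel. r powr (-1 - q) * wt q * f q\<bar> \<le> M * X"
    proof -
      have "\<bar>LINT q:S2|lborel. r powr (-1 - q) * wt q * f q\<bar> \<le> (LINT q:S2|lborel. (M * X) * f q)"
      proof (rule abs_set_int_le[OF int_K])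
        show "set_integrable lborel S2 (\<lambda>q. (M * X) * f q)" using int_f2 by (rule set_integrable_mult_right)
        fix q assume q: "q \<in> S2"
        have q2: "ao + t0 < q" "q \<le> 2" using q by (auto simp: S2_def)
        have "- (q - ao) / \<epsilon> \<le> - t0 / \<epsilon>"
          using divide_right_mono[of "- (q - ao)" "- t0" \<epsilon>] q2 eps(1) by linarith
        then have wX: "wt q \<le> X" unfolding wt_def X_def by simp
        have "r powr (-1 - q) * wt q * f q \<le> M * X * f q"
          using rb[of q] q2 ao_pos wX wt01[of q] fnn[of q] q t0 M by (intro mult_right_mono mult_mono) auto
        moreover have "0 \<le> r powr (-1 - q) * wt q * f q"
          using wt01[of q] fnn[of q] q q2 ao_pos t0 by (intro mult_nonneg_nonneg) auto
        ultimately show "\<bar>r powr (-1 - q) * wt q * f q\<bar> \<le> M * X * f q" by simp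
      qed auto
      also have "\<dots> = M * X * (LINT q:S2|lborel. f q)" by (rule set_integral_mult_right)
      also have "\<dots> \<le> M * X * 1" using f2le M X by (intro mult_left_mono) auto
      finally show ?thesis by simp
    qed
    define G where "G = \<epsilon> * h \<epsilon> * \<Gamma>1"
    have G: "G > 0" unfolding G_def using eps(1) he \<Gamma>1 by (intro mult_pos_pos)
    have Eeq: "Eerr ao f \<beta> n y = r powr (-1 - ao) * (A 0 n - G) + (LINT q:S1|lborel. D q) + (LINT q:S2|lborel. r powr (-1 - q) * wt q * f q)"
      unfolding Eerr_def Iint I1 gt G_def r_def[symmetric] by (simp add: algebra_simps)
    have rb0: "r powr (-1 - ao) \<le> M" using rb[of ao] ao_pos ao_lt by simp
    have Ebd: "\<bar>Eerr ao f \<beta> n y\<bar> \<le> M * \<bar>A 0 n - G\<bar> + C1 * A 1 n + M * X"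
    proof -
      have "\<bar>r powr (-1 - ao) * (A 0 n - G)\<bar> \<le> M * \<bar>A 0 n - G\<bar>"
        unfolding abs_mult using rb0 by (intro mult_right_mono) auto
      then show ?thesis unfolding Eeq using b2 b3 by linarith
    qed
    define Q where "Q = (\<epsilon> / t0) powr \<beta> / (\<epsilon> / t0 + t0 / \<epsilon>)"
    have Q: "Q > 0" unfolding Q_def using eps(1) t0(1) by (intro divide_pos_pos add_pos_pos) auto
    have lowh: "h \<epsilon> \<ge> h t0 * (exp (-1) * Q)"
    proof -
      have "exp (-1) * (\<epsilon> / t0) powr \<beta> / (\<epsilon> / t0 + t0 / \<epsilon>) \<le> h \<epsilon> / h t0"
        using pb eps(1,2) t0(1) by auto
      then have "exp (-1) * Q \<le> h \<epsilon> / h t0" by (simp add: Q_def)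
      then show ?thesis using ht0 by (simp add: field_simps)
    qed
    define G' where "G' = \<epsilon> * (h t0 * (exp (-1) * Q)) * \<Gamma>1"
    have G': "G' > 0" "G' \<le> G" unfolding G'_def G_def using eps(1) ht0 Q \<Gamma>1 lowh
      by (auto intro!: mult_pos_pos mult_right_mono mult_left_mono)
    have t3: "M * X / G \<le> M / (\<Gamma>1 * h t0 * exp (-1)) * R \<epsilon>"
    proof -
      have "M * X / G \<le> M * X / G'" using G' M X by (intro divide_left_mono) auto
      also have "\<dots> = M / (\<Gamma>1 * h t0 * exp (-1)) * R \<epsilon>"
        unfolding G'_def R_def X_def Q_def using eps(1) ht0 \<Gamma>1 Q by (simp add: Q_def field_simps)
      finally show ?thesis .
    qed
    have t1: "M * \<bar>A 0 n - G\<bar> / G = M * \<bar>A 0 n / (\<epsilon> * h \<epsilon>) - \<Gamma>1\<bar> / \<Gamma>1"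
    proof -
      have "A 0 n / (\<epsilon> * h \<epsilon>) - \<Gamma>1 = (A 0 n - G) / (\<epsilon> * h \<epsilon>)"
        using eps(1) he by (simp add: G_def field_simps)
      then have "\<bar>A 0 n / (\<epsilon> * h \<epsilon>) - \<Gamma>1\<bar> = \<bar>A 0 n - G\<bar> / (\<epsilon> * h \<epsilon>)"
        using eps(1) he by (simp add: abs_divide)
      then show ?thesis using eps(1) he \<Gamma>1 by (simp add: G_def field_simps)
    qed
    have t2: "C1 * A 1 n / G = C1 * \<epsilon> * (A 1 n / (\<epsilon> ^ 2 * h \<epsilon>)) / \<Gamma>1"
      using eps(1) he \<Gamma>1 by (simp add: G_def field_simps power2_eq_square)
    have "\<bar>Eerr ao f \<beta> n y\<bar> / G \<le> (M * \<bar>A 0 n - G\<bar> + C1 * A 1 n + M * X) / G"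
      using Ebd G by (intro divide_right_mono) auto
    also have "\<dots> = M * \<bar>A 0 n - G\<bar> / G + C1 * A 1 n / G + M * X / G"
      by (simp add: add_divide_distrib)
    also have "\<dots> \<le> B n"
      unfolding t1 t2 B_def \<epsilon>_def[symmetric] using t3 by simp
    finally show ?thesis using gt G by (simp add: G_def)
  qed
  define Y where "Y = {y::'a. \<delta> \<le> norm y}"
  define y0 where "y0 = \<delta> *\<^sub>R (SOME b::'a. b \<in> Basis)"
  have y0: "y0 \<in> Y" using \<delta>_pos SOME_Basis by (simp add: Y_def y0_def)
  have up: "\<forall>\<^sub>F n in sequentially. (SUP y\<in>Y. ereal (\<bar>Eerr ao f \<beta> n y\<bar> / gtilde ao f \<beta> n)) \<le> ereal (B n)"
    using eventually_ge_at_top[of "max N0 2"]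
  proof eventually_elim
    case (elim n)
    show ?case by (rule SUP_least) (use Bmain[OF elim] in \<open>auto simp: Y_def\<close>)
  qed
  have lo: "\<forall>\<^sub>F n in sequentially. 0 \<le> (SUP y\<in>Y. ereal (\<bar>Eerr ao f \<beta> n y\<bar> / gtilde ao f \<beta> n))"
    using eventually_ge_at_top[of "max N0 2"]
  proof eventually_elim
    case (elim n)
    have "gtilde ao f \<beta> n > 0" using Bmain[OF elim, of y0] y0 by (auto simp: Y_def)
    then have "0 \<le> ereal (\<bar>Eerr ao f \<beta> n y0\<bar> / gtilde ao f \<beta> n)" by simp
    then show ?case by (rule SUP_upper2[OF y0])
  qed
  have Bl: "(\<lambda>n. ereal (B n)) \<longlonglongrightarrow> 0" using Blim by (simp add: zero_ereal_def)
  have "(\<lambda>n. SUP y\<in>Y. ereal (\<bar>Eerr ao f \<beta> n y\<bar> / gtilde ao f \<beta> n)) \<longlonglongrightarrow> 0"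
    by (rule tendsto_sandwich[OF lo up tendsto_const Bl])
  then show ?thesis by (simp add: Y_def)
qed


end
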